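(* Let $n\in\mathbb{N}$ and $r\in\mathbb{F}_2((x^{-1}))$ with $0\le\deg(r)<2^n$. Then $[r]=[P^{2^n}(r)]$.
   Context: $\mathbb{F}_2((x^{-1}))$ is the field of formal series $\sum_{z\in\mathbb{Z}}a_zx^z$, $a_z\in\mathbb{F}_2$, with $a_z\ne0$ for only finitely many positive $z$; $\deg$ is the largest exponent with nonzero coefficient. The polynomial part is $[\sum a_zx^z]=\sum_{z\ge0}a_zx^z$. $P(r)=\frac{x}{x+1}r$ with $\frac{x}{x+1}=\sum_{k\ge0}x^{-k}$. *)

theory Defs
  imports "HOL-Library.Z2" "HOL-Computational_Algebra.Formal_Laurent_Series"
begin

text \<open>F_2((x^{-1})) is modelled as bit fls, formal Laurent series in the variable
  t = x^{-1} over F_2 (type bit).  The coefficient of x^z of r is fls_nth r (-z).\<close>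

type_synonym f2laurent = "bit fls"

definition xvar :: f2laurent where "xvar = fls_X_inv"

definition coeffx :: "f2laurent \<Rightarrow> int \<Rightarrow> bit" where
  "coeffx r z = fls_nth r (- z)"

text \<open>degree in x: largest exponent of x with nonzero coefficient (for r \<noteq> 0)\<close>
definition degx :: "f2laurent \<Rightarrow> int" where
  "degx r = - fls_subdegree r"

definition polypart :: "f2laurent \<Rightarrow> f2laurent" where
  "polypart r = Abs_fls (\<lambda>k. if k \<le> 0 then fls_nth r k else 0)"

definition Pmap :: "f2laurent \<Rightarrow> f2laurent" where
  "Pmap r = (xvar / (xvar + 1)) * r"

end

theory Submission
  imports Defs
begin

lemma bit_fls_add_self: "(a::bit fls) + a = 0"
  by (rule fls_eqI) simp

lemma bit_sq: "(1 + a :: bit fls)^2 = 1 + a^2"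
proof -
  have "(1 + a)^2 = 1 + (a + a) + a * a"
    unfolding power2_eq_square by (simp add: distrib_left distrib_right add.assoc)
  thus ?thesis by (simp add: bit_fls_add_self power2_eq_square)
qed

lemma one_plus_X_pow: "(1 + fls_X :: bit fls) ^ (2 ^ n) = 1 + fls_X ^ (2 ^ n)"
proof (induction n)
  case 0
  then show ?case by simp
next
  case (Suc n)
  have e: "(b::bit fls) ^ (2 ^ Suc n) = (b ^ (2 ^ n))^2" for b
    by (simp only: power_Suc power_mult[symmetric] mult.commute)
  show ?case unfolding e Suc bit_sq ..
qed

lemma Pmap_eq: "Pmap r = r / (1 + fls_X)"
proof -
  have X: "fls_X_inv * fls_X = (1::bit fls)"
    by (simp add: fls_X_inv_times_conv_shift)
  have "xvar + 1 = xvar * (1 + fls_X)"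
    unfolding xvar_def using X by (simp add: algebra_simps)
  hence "xvar / (xvar + 1) = 1 / (1 + fls_X)"
    by (simp add: xvar_def)
  thus ?thesis unfolding Pmap_def by simp
qed

lemma Pmap_iter: "(Pmap ^^ m) r = r / (1 + fls_X) ^ m"
  by (induction m) (simp_all add: Pmap_eq field_simps)

theorem lemma3p1:
  fixes n :: nat and r :: f2laurent
  assumes "r \<noteq> 0" and "0 \<le> degx r" and "degx r < 2 ^ n"
  shows "polypart r = polypart ((Pmap ^^ (2 ^ n)) r)"
proof -
  define N :: nat where "N = 2 ^ n"
  define D :: f2laurent where "D = 1 + fls_X ^ N"
  have N0: "N > 0" by (simp add: N_def)
  have D0: "D \<noteq> 0"
  proof
    assume "D = 0"
    hence "fls_nth D 0 = 0" by simp
    thus False using N0 by (simp add: D_def)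
  qed
  have sD: "fls_subdegree D = 0"
    using N0 by (intro fls_subdegree_eqI) (auto simp: D_def)
  have iter: "(Pmap ^^ (2 ^ n)) r = r / D"
    by (simp add: Pmap_iter one_plus_X_pow D_def N_def)
  define s where "s = r * fls_X ^ N * inverse D"
  have "r / D = r + s"
  proof -
    have "r + s = (r * D + r * fls_X ^ N) / D"
      using D0 by (simp add: s_def field_simps)
    also have "r * D + r * fls_X ^ N = r + (r * fls_X ^ N + r * fls_X ^ N)"
      by (simp add: D_def algebra_simps)
    also have "\<dots> = r" by (simp add: bit_fls_add_self)
    finally show ?thesis by simp
  qed
  have ssub: "fls_subdegree s > 0"
  proof -
    have "fls_subdegree s = fls_subdegree r + int N"
      using assms(1) D0 sD by (simp add: s_def)
    moreover have "fls_subdegree r = - degx r" by (simp add: degx_def)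
    ultimately show ?thesis using assms(3) by (simp add: N_def)
  qed
  have "\<And>k. k \<le> 0 \<Longrightarrow> fls_nth (r + s) k = fls_nth r k"
    using ssub by simp
  hence "(\<lambda>k. if k \<le> 0 then fls_nth r k else 0) = (\<lambda>k. if k \<le> 0 then fls_nth (r + s) k else 0)"
    by auto
  thus ?thesis unfolding polypart_def iter \<open>r / D = r + s\<close> by simp
qed

end
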